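(* Let $p$ be a prime, $d\in\mathbb{N}_{+}$, $V$ a subspace of $\mathbb{F}_{p}^{d}$, and $V_{1},\dots,V_{N}$ linearly independent subspaces of $\mathbb{F}_{p}^{d}$. If $N\geq\dim(V)+2$, then $\bigcap_{i=1}^{N}(V+V_{i})=V$.
   Context: Subspaces $V_{1},\dots,V_{N}$ are linearly independent if whenever $v_{i}\in V_{i}$ and $\sum_{i}v_{i}=\mathbf0$, all $v_{i}=\mathbf0$. *)

theory Defs
  imports "HOL-Analysis.Analysis"
begin

definition subspace_plus :: "('a::field ^ 'd) set \<Rightarrow> ('a ^ 'd) set \<Rightarrow> ('a ^ 'd) set" where
  "subspace_plus V W = {v + w | v w. v \<in> V \<and> w \<in> W}"

definition lin_indep_subspaces :: "nat \<Rightarrow> (nat \<Rightarrow> ('a::field ^ 'd) set) \<Rightarrow> bool" where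
  "lin_indep_subspaces N Vs \<longleftrightarrow>
     (\<forall>v. (\<forall>i\<in>{1..N}. v i \<in> Vs i) \<and> (\<Sum>i=1..N. v i) = 0 \<longrightarrow> (\<forall>i\<in>{1..N}. v i = 0))"

end

theory Submission
  imports Defs
begin

lemma family_dep:
  fixes z :: "nat \<Rightarrow> 'a::field ^ 'd"
  assumes V: "vec.subspace V" and zV: "\<forall>i\<in>I. z i \<in> V" and fin: "finite I"
    and card: "card I > vec.dim V"
  shows "\<exists>c. (\<Sum>i\<in>I. c i *s z i) = 0 \<and> (\<exists>i\<in>I. c i \<noteq> 0)"
proof (cases "inj_on z I")
  case False
  then obtain i j where ij: "i \<in> I" "j \<in> I" "i \<noteq> j" "z i = z j"
    unfolding inj_on_def by blast
  define c :: "nat \<Rightarrow> 'a" where "c = (\<lambda>k. if k = i then 1 else if k = j then -1 else 0)"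
  have "\<And>k. c k *s z k = (if k = i then z i else 0) - (if k = j then z j else 0)"
    using ij by (auto simp: c_def)
  then have "(\<Sum>k\<in>I. c k *s z k) = (\<Sum>k\<in>I. (if k = i then z i else 0)) - (\<Sum>k\<in>I. (if k = j then z j else 0))"
    by (simp add: sum_subtractf)
  also have "\<dots> = 0" using ij fin by simp
  finally show ?thesis using ij by (intro exI[of _ c]) (auto simp: c_def)
next
  case True
  have sub: "z ` I \<subseteq> V" using zV by auto
  have "card (z ` I) = card I" using True by (simp add: card_image)
  then have "vec.dependent (z ` I)"
    using vec.independent_card_le_dim[OF sub] card by fastforce
  then obtain t u where t: "finite t" "t \<subseteq> z ` I" "(\<Sum>v\<in>t. u v *s v) = 0" "\<exists>v\<in>t. u v \<noteq> 0"
    unfolding vec.dependent_explicit by blast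
  define J where "J = {i\<in>I. z i \<in> t}"
  have JI: "J \<subseteq> I" unfolding J_def by auto
  have injJ: "inj_on z J" using True JI inj_on_subset by blast
  have zJ: "z ` J = t" using t(2) unfolding J_def by auto
  define c where "c = (\<lambda>i. if i \<in> J then u (z i) else 0)"
  have "(\<Sum>i\<in>I. c i *s z i) = (\<Sum>i\<in>I. if i \<in> J then u (z i) *s z i else 0)"
    by (rule sum.cong) (auto simp: c_def)
  also have "\<dots> = (\<Sum>i\<in>I \<inter> J. u (z i) *s z i)"
    using fin by (simp add: sum.inter_restrict)
  also have "\<dots> = (\<Sum>i\<in>J. u (z i) *s z i)"
    using JI by (simp add: Int_absorb1)
  also have "\<dots> = (\<Sum>v\<in>t. u v *s v)"
    using sum.reindex[OF injJ, of "\<lambda>v. u v *s v"] zJ by simp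
  also have "\<dots> = 0" by (rule t(3))
  finally have s: "(\<Sum>i\<in>I. c i *s z i) = 0" .
  from t(4) zJ obtain i where "i \<in> J" "u (z i) \<noteq> 0" by auto
  then have "\<exists>i\<in>I. c i \<noteq> 0" using JI unfolding c_def by auto
  with s show ?thesis by blast
qed

theorem proposition3p3:
  fixes p :: nat and V :: "('a::field ^ 'd) set" and Vs :: "nat \<Rightarrow> ('a ^ 'd) set" and N :: nat
  assumes "prime p" and "CARD('a) = p"
    and "vec.subspace V"
    and "\<forall>i\<in>{1..N}. vec.subspace (Vs i)"
    and "lin_indep_subspaces N Vs"
    and "N \<ge> vec.dim V + 2"
  shows "(\<Inter>i\<in>{1..N}. subspace_plus V (Vs i)) = V"
proof
  show "V \<subseteq> (\<Inter>i\<in>{1..N}. subspace_plus V (Vs i))"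
  proof
    fix x assume "x \<in> V"
    show "x \<in> (\<Inter>i\<in>{1..N}. subspace_plus V (Vs i))"
    proof
      fix i assume i: "i \<in> {1..N}"
      have "0 \<in> Vs i" using assms(4) i vec.subspace_0 by blast
      then have "x = x + 0 \<and> x \<in> V \<and> 0 \<in> Vs i" using \<open>x \<in> V\<close> by simp
      then show "x \<in> subspace_plus V (Vs i)" unfolding subspace_plus_def by blast
    qed
  qed
next
  show "(\<Inter>i\<in>{1..N}. subspace_plus V (Vs i)) \<subseteq> V"
  proof
    fix x assume x: "x \<in> (\<Inter>i\<in>{1..N}. subspace_plus V (Vs i))"
    have "\<forall>i\<in>{1..N}. \<exists>uw. x = fst uw + snd uw \<and> fst uw \<in> V \<and> snd uw \<in> Vs i"
      using x unfolding subspace_plus_def by fastforce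
    then obtain uw where uw: "\<forall>i\<in>{1..N}. x = fst (uw i) + snd (uw i) \<and> fst (uw i) \<in> V \<and> snd (uw i) \<in> Vs i"
      by metis
    define u where "u = (\<lambda>i. fst (uw i))"
    define w where "w = (\<lambda>i. snd (uw i))"
    have uw': "\<And>i. i \<in> {1..N} \<Longrightarrow> x = u i + w i \<and> u i \<in> V \<and> w i \<in> Vs i"
      using uw unfolding u_def w_def by auto
    have N2: "N \<ge> 2" using assms(6) by simp
    define z where "z = (\<lambda>i. w i - w N)"
    have zV: "\<forall>i\<in>{1..N-1}. z i \<in> V"
    proof
      fix i assume i: "i \<in> {1..N-1}"
      have a: "x = u i + w i" "u i \<in> V" using uw'[of i] i by auto
      have b: "x = u N + w N" "u N \<in> V" using uw'[of N] N2 by auto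
      have "z i = u N - u i" unfolding z_def using a b by (simp add: algebra_simps)
      then show "z i \<in> V" using vec.subspace_diff[OF assms(3) b(2) a(2)] by simp
    qed
    have cardI: "card {1..N-1} > vec.dim V" using assms(6) by simp
    obtain c where c: "(\<Sum>i\<in>{1..N-1}. c i *s z i) = 0" and i0: "\<exists>i\<in>{1..N-1}. c i \<noteq> 0"
      using family_dep[OF assms(3) zV finite_atLeastAtMost cardI] by blast
    define v where "v = (\<lambda>k. if k < N then c k *s w k else - (\<Sum>i\<in>{1..N-1}. c i) *s w N)"
    have vin: "\<forall>k\<in>{1..N}. v k \<in> Vs k"
    proof
      fix k assume k: "k \<in> {1..N}"
      have "w k \<in> Vs k" using uw'[OF k] by simp
      have sk: "vec.subspace (Vs k)" using assms(4) k by blast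
      show "v k \<in> Vs k"
      proof (cases "k < N")
        case True
        then show ?thesis unfolding v_def using vec.subspace_scale[OF sk \<open>w k \<in> Vs k\<close>] by simp
      next
        case False
        then have "k = N" using k by auto
        then show ?thesis unfolding v_def
          using vec.subspace_neg[OF sk vec.subspace_scale[OF sk \<open>w k \<in> Vs k\<close>]] by simp
      qed
    qed
    obtain M where M: "N = Suc M" using N2 by (cases N) auto
    have "(\<Sum>k=1..N. v k) = (\<Sum>k=1..N-1. v k) + v N"
      unfolding M using N2 M by (simp only: sum.cl_ivl_Suc) simp
    also have "(\<Sum>k=1..N-1. v k) = (\<Sum>k=1..N-1. c k *s w k)"
      by (rule sum.cong) (auto simp: v_def)
    also have "v N = - (\<Sum>i\<in>{1..N-1}. c i *s w N)"
      by (simp add: v_def vec.scale_sum_left)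
    also have "(\<Sum>k=1..N-1. c k *s w k) + - (\<Sum>i\<in>{1..N-1}. c i *s w N) = (\<Sum>i\<in>{1..N-1}. c i *s z i)"
      by (simp add: z_def vec.scale_right_diff_distrib sum_subtractf)
    finally have "(\<Sum>k=1..N. v k) = 0" using c by simp
    then have allz: "\<forall>k\<in>{1..N}. v k = 0"
      using assms(5) vin unfolding lin_indep_subspaces_def by (metis (no_types, lifting))
    from i0 obtain i where i: "i \<in> {1..N-1}" "c i \<noteq> 0" by blast
    have "v i = 0" using allz i by auto
    moreover have "i < N" using i N2 by auto
    ultimately have "c i *s w i = 0" unfolding v_def by simp
    then have "w i = 0" using i(2) by (simp add: vec.scale_eq_0_iff)
    moreover have "x = u i + w i" "u i \<in> V" using uw'[of i] i by auto
    ultimately show "x \<in> V" by simp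
  qed
qed

end
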